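(* Every geodesic $s\mapsto\mathbf t(s)$ of the quasi-Euclidean space $(\mathbb{R}^N\setminus\{0\},\,n_{pq}(g;t))$ lies in a two-dimensional linear subspace of $\mathbb{R}^N$ (through the origin); that is, the geodesics are plane curves.
   Context: Let $N\ge2$; $(r_{pq})$ is a symmetric positive-definite $N\times N$ matrix with $r_{NN}=1$, $r_{Na}=0$ ($a<N$), $S(t)=\sqrt{r_{pq}t^pt^q}$, $L_p=r_{pq}t^q/S(t)$. Fix $g\in(-2,2)$, $h=\sqrt{1-g^2/4}$, $G=g/h$. The quasi-Euclidean metric tensor is $n_{pq}(g;t)=\frac1{h^2}r_{pq}-\frac14G^2L_pL_q$, and geodesics are solutions of the Levi-Civita geodesic equation $\frac{d^2t^p}{ds^2}+N_q{}^p{}_r\frac{dt^q}{ds}\frac{dt^r}{ds}=0$, where $N_q{}^p{}_r$ are the Christoffel symbols of $n_{pq}$. *)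

theory Defs
  imports "HOL-Analysis.Analysis"
begin

definition hpar :: "real \<Rightarrow> real" where
  "hpar g = sqrt (1 - g\<^sup>2 / 4)"

definition Gpar :: "real \<Rightarrow> real" where
  "Gpar g = g / hpar g"

definition Snorm :: "real^'n^'n \<Rightarrow> real^'n \<Rightarrow> real" where
  "Snorm r t = sqrt (\<Sum>p\<in>UNIV. \<Sum>q\<in>UNIV. r$p$q * t$p * t$q)"

definition Lcov :: "real^'n^'n \<Rightarrow> real^'n \<Rightarrow> 'n \<Rightarrow> real" where
  "Lcov r t p = (\<Sum>q\<in>UNIV. r$p$q * t$q) / Snorm r t"

definition qe_metric :: "real \<Rightarrow> real^'n^'n \<Rightarrow> real^'n \<Rightarrow> 'n \<Rightarrow> 'n \<Rightarrow> real" where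
  "qe_metric g r t p q =
     r$p$q / (hpar g)\<^sup>2 - (1/4) * (Gpar g)\<^sup>2 * Lcov r t p * Lcov r t q"

definition qe_metric_matrix :: "real \<Rightarrow> real^'n^'n \<Rightarrow> real^'n \<Rightarrow> real^'n^'n" where
  "qe_metric_matrix g r t = (\<chi> p q. qe_metric g r t p q)"

definition qe_inv_metric :: "real \<Rightarrow> real^'n^'n \<Rightarrow> real^'n \<Rightarrow> 'n \<Rightarrow> 'n \<Rightarrow> real" where
  "qe_inv_metric g r t p q = matrix_inv (qe_metric_matrix g r t) $ p $ q"

definition partial :: "(real^'n \<Rightarrow> real) \<Rightarrow> 'n \<Rightarrow> real^'n \<Rightarrow> real" where
  "partial f k t = deriv (\<lambda>x. f (t + x *\<^sub>R axis k 1)) 0"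

definition christoffel :: "real \<Rightarrow> real^'n^'n \<Rightarrow> real^'n \<Rightarrow> 'n \<Rightarrow> 'n \<Rightarrow> 'n \<Rightarrow> real" where
  "christoffel g r t q p s =
     (1/2) * (\<Sum>m\<in>UNIV. qe_inv_metric g r t p m *
        (partial (\<lambda>x. qe_metric g r x m s) q t
         + partial (\<lambda>x. qe_metric g r x m q) s t
         - partial (\<lambda>x. qe_metric g r x q s) m t))"

definition qe_geodesic ::
  "real \<Rightarrow> real^'n^'n \<Rightarrow> (real \<Rightarrow> real^'n) \<Rightarrow> real \<Rightarrow> real \<Rightarrow> bool" where
  "qe_geodesic g r c a b \<longleftrightarrow>
     (\<exists>c' c''. \<forall>s\<in>{a<..<b}.
        c s \<noteq> 0 \<and>
        (c has_vector_derivative c' s) (at s) \<and>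
        (c' has_vector_derivative c'' s) (at s) \<and>
        (\<forall>p. c'' s $ p + (\<Sum>q\<in>UNIV. \<Sum>m\<in>UNIV.
                 christoffel g r (c s) q p m * c' s $ q * c' s $ m) = 0))"

end

theory Submission
  imports Defs
begin


abbreviation Qf :: "real^'n^'n \<Rightarrow> real^'n \<Rightarrow> real" where
  "Qf r t \<equiv> (\<Sum>p\<in>UNIV. \<Sum>q\<in>UNIV. r$p$q * t$p * t$q)"

lemma Lcov_eq: "Lcov r t p = (r *v t)$p / Snorm r t"
  by (simp add: Lcov_def matrix_vector_mult_def)

lemma axis_mult: "(r::real^'n^'n) *v axis k 1 = column k r"
  by (simp add: vec_eq_iff matrix_vector_mult_def axis_def column_def if_distrib cong: if_cong)

lemma axis_nth': "axis k (1::real) $ p = (if p = k then 1 else 0)"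
  by (simp add: axis_def)

lemma line_A: "((r::real^'n^'n) *v (t + y *\<^sub>R axis k 1))$m = (r *v t)$m + y * r$m$k"
  by (simp add: matrix_vector_right_distrib matrix_vector_mult_scaleR axis_mult column_def)

lemma Q_A: "Qf r t = (\<Sum>p\<in>UNIV. t$p * (r *v t)$p)"
  by (simp add: matrix_vector_mult_def sum_distrib_left algebra_simps)

lemma line_Q:
  fixes r :: "real^'n^'n"
  assumes sym: "\<forall>p q. r$p$q = r$q$p"
  shows "Qf r (t + y *\<^sub>R axis k 1) = Qf r t + y * (2 * (r *v t)$k) + y^2 * r$k$k"
proof -
  have "Qf r (t + y *\<^sub>R axis k 1) = (\<Sum>p\<in>UNIV. (t + y *\<^sub>R axis k 1)$p * (r *v (t + y *\<^sub>R axis k 1))$p)"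
    by (rule Q_A)
  also have "\<dots> = (\<Sum>p\<in>UNIV. t$p * (r *v t)$p + y * (t$p * r$p$k) + (if p = k then y * (r *v t)$p + y^2 * r$p$k else 0))"
    by (intro sum.cong refl) (unfold line_A, simp add: axis_nth' algebra_simps power2_eq_square)
  also have "\<dots> = Qf r t + y * (\<Sum>p\<in>UNIV. t$p * r$p$k) + (y * (r *v t)$k + y^2 * r$k$k)"
    by (simp add: sum.distrib Q_A sum_distrib_left)
  also have "(\<Sum>p\<in>UNIV. t$p * r$p$k) = (r *v t)$k"
    using sym by (simp add: matrix_vector_mult_def mult.commute)
  finally show ?thesis by (simp add: algebra_simps)
qed

lemma L_line:
  fixes r :: "real^'n^'n"
  assumes sym: "\<forall>p q. r$p$q = r$q$p"
  shows "Lcov r (t + y *\<^sub>R axis k 1) m =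
    ((r *v t)$m + y * r$m$k) / sqrt (Qf r t + y * (2 * (r *v t)$k) + y^2 * r$k$k)"
  unfolding Lcov_eq Snorm_def line_Q[OF sym] line_A ..

lemma deriv_frac:
  fixes Q a b c d :: real
  assumes "Q > 0"
  shows "((\<lambda>y. (a + y*b) / sqrt (Q + y*c + y^2*d)) has_real_derivative
           (b / sqrt Q - a*c/(2 * Q * sqrt Q))) (at 0)"
proof -
  have P: "((\<lambda>y. Q + y*c + y^2*d) has_real_derivative c) (at 0)"
    by (auto intro!: derivative_eq_intros)
  have S: "((\<lambda>y. sqrt (Q + y*c + y^2*d)) has_real_derivative (inverse (sqrt Q) / 2 * c)) (at 0)"
    using DERIV_chain2[OF DERIV_real_sqrt P] assms by simp
  have N: "((\<lambda>y. a + y*b) has_real_derivative b) (at 0)"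
    by (auto intro!: derivative_eq_intros)
  have "((\<lambda>y. (a + y*b) / sqrt (Q + y*c + y^2*d)) has_real_derivative
      (b * sqrt Q - (inverse (sqrt Q) / 2 * c) * a) / (sqrt Q * sqrt Q)) (at 0)"
    using DERIV_divide[OF N S] assms by (simp add: mult_ac)
  moreover have "(b * sqrt Q - (inverse (sqrt Q) / 2 * c) * a) / (sqrt Q * sqrt Q) = b / sqrt Q - a*c/(2 * Q * sqrt Q)"
    using assms by (simp add: field_simps)
  ultimately show ?thesis by simp
qed



lemma alg2:
  fixes Q a b x y z :: real
  assumes "Q > 0"
  shows "(a / sqrt Q - x * (2 * z) / (2 * Q * sqrt Q)) * (y / sqrt Q)
     + (b / sqrt Q - y * (2 * z) / (2 * Q * sqrt Q)) * (x / sqrt Q)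
     = (a * y + x * b) / Q - 2 * x * y * z / Q^2"
proof -
  define sq where "sq = sqrt Q"
  have sq0: "sq > 0" using assms sq_def by simp
  have Qsq: "Q = sq^2" using assms sq_def by simp
  have "(a / sq - x * (2 * z) / (2 * sq^2 * sq)) * (y / sq) + (b / sq - y * (2 * z) / (2 * sq^2 * sq)) * (x / sq)
       = (a * y + x * b) / sq^2 - 2 * x * y * z / (sq^2)^2"
    using sq0 by (simp add: field_simps power2_eq_square)
  then show ?thesis by (simp only: sq_def[symmetric] Qsq[symmetric])
qed

lemma partial_metric:
  fixes r :: "real^'n^'n"
  assumes sym: "\<forall>p q. r$p$q = r$q$p" and Qpos: "Qf r t > 0"
  shows "partial (\<lambda>x. qe_metric g r x m s) k t =
    -(1/4) * (Gpar g)^2 * ((r$m$k * (r *v t)$s + (r *v t)$m * r$s$k) / Qf r t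
       - 2 * (r *v t)$m * (r *v t)$s * (r *v t)$k / (Qf r t)^2)"
proof -
  define A where "A = r *v t"
  define Q where "Q = Qf r t"
  have Q0: "Q > 0" using Qpos Q_def by simp
  define Lm where "Lm y = (A$m + y * r$m$k) / sqrt (Q + y * (2 * A$k) + y^2 * r$k$k)" for y
  define Ls where "Ls y = (A$s + y * r$s$k) / sqrt (Q + y * (2 * A$k) + y^2 * r$k$k)" for y
  have eq: "(\<lambda>y. qe_metric g r (t + y *\<^sub>R axis k 1) m s) =
      (\<lambda>y. r$m$s / (hpar g)^2 - (1/4) * (Gpar g)^2 * (Lm y * Ls y))"
    by (rule ext) (simp only: qe_metric_def L_line[OF sym] Lm_def Ls_def A_def Q_def mult.assoc)
  have dm: "(Lm has_real_derivative (r$m$k / sqrt Q - A$m * (2 * A$k) / (2 * Q * sqrt Q))) (at 0)"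
    unfolding Lm_def[abs_def] by (rule deriv_frac[OF Q0])
  have ds: "(Ls has_real_derivative (r$s$k / sqrt Q - A$s * (2 * A$k) / (2 * Q * sqrt Q))) (at 0)"
    unfolding Ls_def[abs_def] by (rule deriv_frac[OF Q0])
  have L0: "Lm 0 = A$m / sqrt Q" "Ls 0 = A$s / sqrt Q" by (simp_all add: Lm_def Ls_def)
  have D: "((\<lambda>y. r$m$s / (hpar g)^2 - (1/4) * (Gpar g)^2 * (Lm y * Ls y)) has_real_derivative
     (0 - (1/4) * (Gpar g)^2 * ((r$m$k / sqrt Q - A$m * (2 * A$k) / (2 * Q * sqrt Q)) * Ls 0
        + (r$s$k / sqrt Q - A$s * (2 * A$k) / (2 * Q * sqrt Q)) * Lm 0))) (at 0)"
    by (intro DERIV_diff DERIV_const DERIV_cmult DERIV_mult dm ds)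
  then have D2: "((\<lambda>y. qe_metric g r (t + y *\<^sub>R axis k 1) m s) has_real_derivative
     (0 - (1/4) * (Gpar g)^2 * ((r$m$k * A$s + A$m * r$s$k) / Q - 2 * A$m * A$s * A$k / Q^2))) (at 0)"
    unfolding eq L0 alg2[OF Q0] .
  have "partial (\<lambda>x. qe_metric g r x m s) k t =
     0 - (1/4) * (Gpar g)^2 * ((r$m$k * A$s + A$m * r$s$k) / Q - 2 * A$m * A$s * A$k / Q^2)"
    unfolding partial_def by (rule DERIV_imp_deriv[OF D2])
  then show ?thesis by (simp add: A_def Q_def)
qed

lemma hG:
  assumes "-2 < g" "g < 2"
  shows "hpar g > 0" "1 / (hpar g)^2 - (1/4) * (Gpar g)^2 = 1"
proof -
  have "0 < (2 - g) * (2 + g)" using assms by (intro mult_pos_pos) auto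
  then have g2: "g^2 < 4" by (simp add: algebra_simps power2_eq_square)
  have hh: "(hpar g)^2 = 1 - g^2/4" unfolding hpar_def using g2 by simp
  show "hpar g > 0" unfolding hpar_def using g2 by simp
  then show "1 / (hpar g)^2 - (1/4) * (Gpar g)^2 = 1"
    unfolding Gpar_def using hh g2 by (simp add: field_simps power_divide)
qed

lemma sum_L_t:
  fixes r :: "real^'n^'n"
  assumes Qpos: "Qf r t > 0"
  shows "(\<Sum>q\<in>UNIV. Lcov r t q * t$q) = Snorm r t" and "Snorm r t > 0"
proof -
  have "(\<Sum>q\<in>UNIV. Lcov r t q * t$q) = (\<Sum>q\<in>UNIV. t$q * (r *v t)$q) / Snorm r t"
    by (simp add: Lcov_eq sum_divide_distrib mult.commute)
  also have "\<dots> = Qf r t / Snorm r t" by (simp add: Q_A)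
  also have "\<dots> = Snorm r t" unfolding Snorm_def using Qpos
    by (simp add: real_div_sqrt)
  finally show "(\<Sum>q\<in>UNIV. Lcov r t q * t$q) = Snorm r t" .
  show "Snorm r t > 0" unfolding Snorm_def using Qpos by simp
qed

lemma N_apply:
  "(qe_metric_matrix g r t *v u)$p = (r *v u)$p / (hpar g)^2
     - (1/4) * (Gpar g)^2 * Lcov r t p * (\<Sum>q\<in>UNIV. Lcov r t q * u$q)"
  by (simp add: qe_metric_matrix_def qe_metric_def matrix_vector_mult_def sum_subtractf
       sum_distrib_left sum_divide_distrib algebra_simps)

lemma N_t:
  fixes r :: "real^'n^'n"
  assumes Qpos: "Qf r t > 0" and g: "-2 < g" "g < 2"
  shows "qe_metric_matrix g r t *v t = r *v t"
proof -
  have "(qe_metric_matrix g r t *v t)$p = (r *v t)$p" for p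
  proof -
  have "(qe_metric_matrix g r t *v t)$p = (r *v t)$p / (hpar g)^2
     - (1/4) * (Gpar g)^2 * ((r *v t)$p / Snorm r t) * Snorm r t"
    unfolding N_apply sum_L_t(1)[OF Qpos] Lcov_eq[of r t p] ..
  also have "\<dots> = (r *v t)$p * (1 / (hpar g)^2 - (1/4) * (Gpar g)^2)"
    using sum_L_t(2)[OF Qpos] by (simp add: field_simps)
  also have "\<dots> = (r *v t)$p" using hG[OF g] by simp
  finally show "(qe_metric_matrix g r t *v t)$p = (r *v t)$p" .
  qed
  then show ?thesis by (simp add: vec_eq_iff)
qed

lemma N_inj:
  fixes r :: "real^'n^'n"
  assumes sym: "\<forall>p q. r$p$q = r$q$p"
    and pd: "\<forall>x::real^'n. x \<noteq> 0 \<longrightarrow> Qf r x > 0"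
    and Qpos: "Qf r t > 0" and g: "-2 < g" "g < 2"
    and Nu: "qe_metric_matrix g r t *v u = 0"
  shows "u = 0"
proof -
  define Lu where "Lu = (\<Sum>q\<in>UNIV. Lcov r t q * u$q)"
  define \<beta> where "\<beta> = (1/4) * (Gpar g)^2"
  define \<alpha> where "\<alpha> = 1 / (hpar g)^2"
  have ab: "\<alpha> - \<beta> = 1" using hG[OF g] \<alpha>_def \<beta>_def by simp
  have h0: "hpar g > 0" using hG[OF g] by simp
  have comp: "(r *v u)$p * \<alpha> = \<beta> * Lcov r t p * Lu" for p
    using arg_cong[OF Nu, of "\<lambda>v. v$p"] unfolding N_apply Lu_def \<alpha>_def \<beta>_def by simp
  have "(\<Sum>p\<in>UNIV. t$p * ((r *v u)$p * \<alpha>)) = (\<Sum>p\<in>UNIV. t$p * (\<beta> * Lcov r t p * Lu))"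
    using comp by simp
  moreover have "(\<Sum>p\<in>UNIV. t$p * ((r *v u)$p * \<alpha>)) = \<alpha> * Snorm r t * Lu"
  proof -
    have "(\<Sum>p\<in>UNIV. t$p * (r *v u)$p) = (\<Sum>q\<in>UNIV. (r *v t)$q * u$q)"
      apply (simp add: matrix_vector_mult_def sum_distrib_left sum_distrib_right)
      apply (subst sum.swap)
      using sym by (simp add: mult_ac)
    also have "\<dots> = Snorm r t * Lu"
      unfolding Lu_def Lcov_eq using sum_L_t(2)[OF Qpos]
      by (simp add: sum_distrib_left field_simps)
    finally show ?thesis by (simp add: sum_distrib_left[symmetric] algebra_simps)
  qed
  moreover have "(\<Sum>p\<in>UNIV. t$p * (\<beta> * Lcov r t p * Lu)) = \<beta> * Lu * (\<Sum>q\<in>UNIV. Lcov r t q * t$q)"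
    by (simp add: sum_distrib_left mult_ac)
  then have "(\<Sum>p\<in>UNIV. t$p * (\<beta> * Lcov r t p * Lu)) = \<beta> * Lu * Snorm r t"
    using sum_L_t(1)[OF Qpos] by simp
  ultimately have "(\<alpha> - \<beta>) * Snorm r t * Lu = 0" by (simp add: algebra_simps)
  then have Lu0: "Lu = 0" using ab sum_L_t(2)[OF Qpos] by simp
  have "(r *v u)$p = 0" for p using comp[of p] Lu0 h0 \<alpha>_def by simp
  then have "Qf r u = 0" by (simp add: Q_A)
  then show "u = 0" using pd by force
qed

lemma inv_N:
  fixes r :: "real^'n^'n"
  assumes sym: "\<forall>p q. r$p$q = r$q$p"
    and pd: "\<forall>x::real^'n. x \<noteq> 0 \<longrightarrow> Qf r x > 0"
    and Qpos: "Qf r t > 0" and g: "-2 < g" "g < 2"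
  shows "matrix_inv (qe_metric_matrix g r t) *v (r *v t) = t"
proof -
  let ?N = "qe_metric_matrix g r t"
  have "\<exists>B. B ** ?N = mat 1"
    unfolding matrix_left_invertible_ker using N_inj[OF sym pd Qpos g] by blast
  then have "invertible ?N" by (simp add: invertible_left_inverse)
  then have "?N ** matrix_inv ?N = mat 1 \<and> matrix_inv ?N ** ?N = mat 1"
    unfolding invertible_def matrix_inv_def by (rule someI_ex)
  then have "matrix_inv ?N ** ?N = mat 1" by simp
  then show ?thesis
    by (metis N_t[OF Qpos g] matrix_vector_mul_assoc matrix_vector_mul_lid)
qed

definition Fq :: "real \<Rightarrow> real^'n^'n \<Rightarrow> real^'n \<Rightarrow> 'n \<Rightarrow> 'n \<Rightarrow> real" where
  "Fq g r t q m = -(1/4) * (Gpar g)^2 * ((r$m$q + r$q$m) / Qf r t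
       - 2 * (r *v t)$m * (r *v t)$q / (Qf r t)^2)"

lemma alg_E:
  fixes c rjq rmq rjm rqm Aj Am Aq Q :: real
  shows "c * ((rjq*Am + Aj*rmq)/Q - 2*Aj*Am*Aq/Q^2) + c * ((rjm*Aq + Aj*rqm)/Q - 2*Aj*Aq*Am/Q^2)
     - c * ((rjq*Am + Aq*rjm)/Q - 2*Aq*Am*Aj/Q^2) = Aj * (c * ((rmq + rqm)/Q - 2*Am*Aq/Q^2))"
  by (simp add: algebra_simps add_divide_distrib diff_divide_distrib)

lemma christoffel_eq:
  fixes r :: "real^'n^'n"
  assumes sym: "\<forall>p q. r$p$q = r$q$p"
    and pd: "\<forall>x::real^'n. x \<noteq> 0 \<longrightarrow> Qf r x > 0"
    and Qpos: "Qf r t > 0" and g: "-2 < g" "g < 2"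
  shows "christoffel g r t q p m = t$p * ((1/2) * Fq g r t q m)"
proof -
  have E: "partial (\<lambda>x. qe_metric g r x j m) q t + partial (\<lambda>x. qe_metric g r x j q) m t
      - partial (\<lambda>x. qe_metric g r x q m) j t = (r *v t)$j * Fq g r t q m" for j
  proof -
    have s1: "r$q$j = r$j$q" "r$m$j = r$j$m" using sym by auto
    show ?thesis unfolding partial_metric[OF sym Qpos] Fq_def s1
      by (rule alg_E)
  qed
  have "christoffel g r t q p m = (1/2) * (\<Sum>j\<in>UNIV. qe_inv_metric g r t p j * (r *v t)$j) * Fq g r t q m"
  proof -
    have "(\<Sum>j\<in>UNIV. qe_inv_metric g r t p j * ((r *v t)$j * Fq g r t q m))
        = (\<Sum>j\<in>UNIV. qe_inv_metric g r t p j * (r *v t)$j) * Fq g r t q m"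
      by (simp add: sum_distrib_right mult.assoc)
    then show ?thesis unfolding christoffel_def E by simp
  qed
  also have "(\<Sum>j\<in>UNIV. qe_inv_metric g r t p j * (r *v t)$j) = t$p"
    using arg_cong[OF inv_N[OF sym pd Qpos g], of "\<lambda>v. v$p"]
    by (simp add: qe_inv_metric_def matrix_vector_mult_def)
  finally show ?thesis by simp
qed



lemma inner_deriv:
  fixes x :: "real \<Rightarrow> 'a::real_inner"
  assumes "(x has_vector_derivative v) (at s)"
  shows "((\<lambda>s. \<alpha> \<bullet> x s) has_real_derivative (\<alpha> \<bullet> v)) (at s)"
  using bounded_linear.has_vector_derivative[OF bounded_linear_inner_right assms]
  by (simp add: has_real_derivative_iff_has_vector_derivative)

lemma self_deriv:
  fixes x :: "real \<Rightarrow> 'a::real_inner"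
  assumes "(x has_vector_derivative v) (at s)"
  shows "((\<lambda>s. x s \<bullet> x s) has_real_derivative (2 * (x s \<bullet> v))) (at s)"
  using bounded_bilinear.has_vector_derivative[OF bounded_bilinear_inner assms assms]
  by (simp add: has_real_derivative_iff_has_vector_derivative inner_commute)

lemma par_vec:
  fixes X Y z :: "'a::real_inner"
  assumes "z \<bullet> X \<noteq> 0" and "\<forall>\<beta>. (z \<bullet> X) * (\<beta> \<bullet> Y) - (\<beta> \<bullet> X) * (z \<bullet> Y) = 0"
  shows "\<exists>l. Y = l *\<^sub>R X"
proof -
  define \<beta> where "\<beta> = (z \<bullet> X) *\<^sub>R Y - (z \<bullet> Y) *\<^sub>R X"
  have "\<beta> \<bullet> \<beta> = (z \<bullet> X) * (\<beta> \<bullet> Y) - (\<beta> \<bullet> X) * (z \<bullet> Y)"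
    by (simp add: \<beta>_def inner_diff_right inner_commute[of \<beta>] algebra_simps)
  also have "\<dots> = 0" using assms(2) by blast
  finally have "\<beta> = 0" by simp
  then have e: "(z \<bullet> X) *\<^sub>R Y = (z \<bullet> Y) *\<^sub>R X" by (simp add: \<beta>_def)
  have "Y = (1 / (z \<bullet> X)) *\<^sub>R ((z \<bullet> X) *\<^sub>R Y)" using assms(1) by simp
  also have "\<dots> = ((z \<bullet> Y) / (z \<bullet> X)) *\<^sub>R X" unfolding e by simp
  finally have "Y = ((z \<bullet> Y) / (z \<bullet> X)) *\<^sub>R X" .
  then show ?thesis by blast
qed

lemma zeroW:
  fixes X Y :: "'a::real_inner"
  assumes "Y = l *\<^sub>R X"
  shows "(\<alpha> \<bullet> X) * (\<beta> \<bullet> Y) - (\<beta> \<bullet> X) * (\<alpha> \<bullet> Y) = 0"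
  using assms by simp

lemma W_const:
  fixes x v acc :: "real \<Rightarrow> 'a::real_inner"
  assumes H: "\<forall>s\<in>{a<..<b}. (x has_vector_derivative v s) (at s) \<and>
        (v has_vector_derivative acc s) (at s) \<and> acc s = \<mu> s *\<^sub>R x s"
    and s: "s \<in> {a<..<b}" and s0: "s0 \<in> {a<..<b}"
  shows "(\<alpha> \<bullet> x s) * (\<beta> \<bullet> v s) - (\<beta> \<bullet> x s) * (\<alpha> \<bullet> v s)
       = (\<alpha> \<bullet> x s0) * (\<beta> \<bullet> v s0) - (\<beta> \<bullet> x s0) * (\<alpha> \<bullet> v s0)"
proof -
  have "\<exists>C. \<forall>s\<in>{a<..<b}. (\<alpha> \<bullet> x s) * (\<beta> \<bullet> v s) - (\<beta> \<bullet> x s) * (\<alpha> \<bullet> v s) = C"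
  proof (rule has_field_derivative_zero_constant)
    show "convex {a<..<b}" by simp
    fix t assume t: "t \<in> {a<..<b}"
    have HH: "(x has_vector_derivative v t) (at t) \<and> (v has_vector_derivative acc t) (at t) \<and> acc t = \<mu> t *\<^sub>R x t"
      using H t by blast
    then have d1: "(x has_vector_derivative v t) (at t)" and d2: "(v has_vector_derivative acc t) (at t)"
      and ac: "acc t = \<mu> t *\<^sub>R x t" by auto
    have "((\<lambda>s. (\<alpha> \<bullet> x s) * (\<beta> \<bullet> v s) - (\<beta> \<bullet> x s) * (\<alpha> \<bullet> v s)) has_real_derivative
        ((\<alpha> \<bullet> v t) * (\<beta> \<bullet> v t) + (\<beta> \<bullet> acc t) * (\<alpha> \<bullet> x t)
         - ((\<beta> \<bullet> v t) * (\<alpha> \<bullet> v t) + (\<alpha> \<bullet> acc t) * (\<beta> \<bullet> x t)))) (at t)"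
      by (intro DERIV_diff DERIV_mult inner_deriv d1 d2)
    moreover have "(\<alpha> \<bullet> v t) * (\<beta> \<bullet> v t) + (\<beta> \<bullet> acc t) * (\<alpha> \<bullet> x t)
         - ((\<beta> \<bullet> v t) * (\<alpha> \<bullet> v t) + (\<alpha> \<bullet> acc t) * (\<beta> \<bullet> x t)) = 0"
      by (simp add: ac algebra_simps)
    ultimately show "((\<lambda>s. (\<alpha> \<bullet> x s) * (\<beta> \<bullet> v s) - (\<beta> \<bullet> x s) * (\<alpha> \<bullet> v s)) has_field_derivative 0)
        (at t within {a<..<b})"
      by (simp add: has_field_derivative_at_within)
  qed
  then show ?thesis using s s0 by metis
qed

lemma ratio_const:
  fixes x v acc :: "real \<Rightarrow> 'a::real_inner"
  assumes H: "\<forall>s\<in>{a<..<b}. x s \<noteq> 0 \<and> (x has_vector_derivative v s) (at s)"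
    and par: "\<forall>s\<in>{a<..<b}. \<exists>l. v s = l *\<^sub>R x s"
    and s: "s \<in> {a<..<b}" and s0: "s0 \<in> {a<..<b}"
  shows "(z \<bullet> x s)^2 / (x s \<bullet> x s) = (z \<bullet> x s0)^2 / (x s0 \<bullet> x s0)"
proof -
  have "\<exists>C. \<forall>s\<in>{a<..<b}. (z \<bullet> x s) * (z \<bullet> x s) / (x s \<bullet> x s) = C"
  proof (rule has_field_derivative_zero_constant)
    show "convex {a<..<b}" by simp
    fix t assume t: "t \<in> {a<..<b}"
    then have d1: "(x has_vector_derivative v t) (at t)" and nz: "x t \<noteq> 0" using H by auto
    obtain l where l: "v t = l *\<^sub>R x t" using par t by blast
    have D: "((\<lambda>s. (z \<bullet> x s) * (z \<bullet> x s) / (x s \<bullet> x s)) has_real_derivative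
        (((z \<bullet> v t) * (z \<bullet> x t) + (z \<bullet> v t) * (z \<bullet> x t)) * (x t \<bullet> x t) - ((z \<bullet> x t) * (z \<bullet> x t)) * (2 * (x t \<bullet> v t)))
          / ((x t \<bullet> x t) * (x t \<bullet> x t))) (at t)"
      using DERIV_divide[OF DERIV_mult[OF inner_deriv[OF d1, of z] inner_deriv[OF d1, of z]] self_deriv[OF d1]] nz by simp
    have Z: "(((z \<bullet> v t) * (z \<bullet> x t) + (z \<bullet> v t) * (z \<bullet> x t)) * (x t \<bullet> x t) - ((z \<bullet> x t) * (z \<bullet> x t)) * (2 * (x t \<bullet> v t))) = 0"
      by (simp add: l algebra_simps)
    show "((\<lambda>s. (z \<bullet> x s) * (z \<bullet> x s) / (x s \<bullet> x s)) has_field_derivative 0)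
        (at t within {a<..<b})"
      using D[unfolded Z] by (simp add: has_field_derivative_at_within)
  qed
  then show ?thesis using s s0 by (metis power2_eq_square)
qed

lemma two_dim:
  fixes u e :: "real^'n"
  assumes u0: "u \<noteq> 0" and e: "e \<notin> span {u}"
  shows "subspace (span {u, e}) \<and> dim (span {u, e}) = 2"
proof -
  have eu: "e \<noteq> u" using e span_base[of u "{u}"] by auto
  have iu: "independent {u}" using u0 by (simp add: independent_insert)
  have "independent (insert e {u})" using iu e eu by (simp add: independent_insert)
  then have "independent {u, e}" by (simp add: insert_commute)
  then have "dim {u, e} = 2" using eu by (simp add: dim_eq_card_independent)
  then show ?thesis by simp
qed

lemma exists_out:
  fixes u :: "real^'n"
  assumes card: "CARD('n) \<ge> 2"
  shows "\<exists>e. e \<notin> span {u}"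
proof (rule ccontr)
  assume "\<not> (\<exists>e. e \<notin> span {u})"
  then have "span {u} = UNIV" by auto
  then have "dim (UNIV :: (real^'n) set) = dim {u}" by (metis dim_span)
  also have "\<dots> \<le> card {u}" by (rule dim_le_card) (auto intro: span_base)
  finally show False using card by simp
qed

lemma decomp_nz:
  fixes X :: "real^'n"
  assumes "X \<notin> span S"
  obtains z where "\<And>w. w \<in> span S \<Longrightarrow> z \<bullet> w = 0" "z \<bullet> X \<noteq> 0"
proof -
  obtain y z where y: "y \<in> span S" and z: "\<And>w. w \<in> span S \<Longrightarrow> orthogonal z w" and X: "X = y + z"
    using orthogonal_subspace_decomp_exists[of S X] by metis
  have zy: "z \<bullet> y = 0" using z[OF y] by (simp add: orthogonal_def)
  have "z \<noteq> 0" using assms X y by auto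
  then have "z \<bullet> X \<noteq> 0" using zy X by (simp add: inner_add_right)
  then show ?thesis using that z by (auto simp: orthogonal_def)
qed

lemma planar:
  fixes x v acc :: "real \<Rightarrow> real^'n"
  assumes card: "CARD('n) \<ge> 2" and ab: "a < b"
    and H: "\<forall>s\<in>{a<..<b}. x s \<noteq> 0 \<and> (x has_vector_derivative v s) (at s) \<and>
        (v has_vector_derivative acc s) (at s) \<and> acc s = \<mu> s *\<^sub>R x s"
  shows "\<exists>V. subspace V \<and> dim V = 2 \<and> (\<forall>s\<in>{a<..<b}. x s \<in> V)"
proof -
  define s0 where "s0 = (a + b) / 2"
  have s0I: "s0 \<in> {a<..<b}" using ab by (simp add: s0_def)
  define u where "u = x s0"
  define w0 where "w0 = v s0"
  have u0: "u \<noteq> 0" using H s0I unfolding u_def by blast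
  have H1: "\<forall>s\<in>{a<..<b}. (x has_vector_derivative v s) (at s) \<and>
        (v has_vector_derivative acc s) (at s) \<and> acc s = \<mu> s *\<^sub>R x s" using H by blast
  have H2: "\<forall>s\<in>{a<..<b}. x s \<noteq> 0 \<and> (x has_vector_derivative v s) (at s)" using H by blast
  have W: "(\<alpha> \<bullet> x s) * (\<beta> \<bullet> v s) - (\<beta> \<bullet> x s) * (\<alpha> \<bullet> v s)
       = (\<alpha> \<bullet> u) * (\<beta> \<bullet> w0) - (\<beta> \<bullet> u) * (\<alpha> \<bullet> w0)" if "s \<in> {a<..<b}" for \<alpha> \<beta> s
    using W_const[OF H1 that s0I] u_def w0_def by simp
  show ?thesis
  proof (cases "\<exists>l. w0 = l *\<^sub>R u")
    case True
    then obtain l where l: "w0 = l *\<^sub>R u" by blast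
    have par: "\<forall>s\<in>{a<..<b}. \<exists>l. v s = l *\<^sub>R x s"
    proof
      fix s assume s: "s \<in> {a<..<b}"
      have "x s \<bullet> x s \<noteq> 0" using H s by auto
      moreover have "\<forall>\<beta>. (x s \<bullet> x s) * (\<beta> \<bullet> v s) - (\<beta> \<bullet> x s) * (x s \<bullet> v s) = 0"
        using W[OF s] zeroW[OF l] by simp
      ultimately show "\<exists>l. v s = l *\<^sub>R x s" by (rule par_vec)
    qed
    have inl: "x s \<in> span {u}" if s: "s \<in> {a<..<b}" for s
    proof (rule ccontr)
      assume nin: "x s \<notin> span {u}"
      obtain z where z: "\<And>w. w \<in> span {u} \<Longrightarrow> z \<bullet> w = 0" and zx: "z \<bullet> x s \<noteq> 0"
        using decomp_nz[OF nin] by blast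
      have zu: "z \<bullet> u = 0" using z span_base[of u "{u}"] by auto
      have "(z \<bullet> x s)^2 / (x s \<bullet> x s) = (z \<bullet> x s0)^2 / (x s0 \<bullet> x s0)"
        by (rule ratio_const[OF H2 par s s0I])
      also have "\<dots> = 0" using zu u_def by simp
      finally show False using zx H s by simp
    qed
    obtain e where e: "e \<notin> span {u}" using exists_out[OF card] by blast
    have "span {u} \<subseteq> span {u, e}" by (rule span_mono) auto
    then show ?thesis using two_dim[OF u0 e] inl by blast
  next
    case False
    have e: "w0 \<notin> span {u}" using False by (auto simp: span_singleton)
    have "x s \<in> span {u, w0}" if s: "s \<in> {a<..<b}" for s
    proof (rule ccontr)
      assume nin: "x s \<notin> span {u, w0}"
      obtain z where z: "\<And>w. w \<in> span {u, w0} \<Longrightarrow> z \<bullet> w = 0" and zx: "z \<bullet> x s \<noteq> 0"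
        using decomp_nz[OF nin] by blast
      have zu: "z \<bullet> u = 0" "z \<bullet> w0 = 0" using z span_base[of _ "{u, w0}"] by auto
      have "\<forall>\<beta>. (z \<bullet> x s) * (\<beta> \<bullet> v s) - (\<beta> \<bullet> x s) * (z \<bullet> v s) = 0"
        using W[OF s] zu by simp
      then obtain l where l: "v s = l *\<^sub>R x s" using par_vec zx by blast
      have "\<forall>\<beta>. (u \<bullet> u) * (\<beta> \<bullet> w0) - (\<beta> \<bullet> u) * (u \<bullet> w0) = 0"
        using W[OF s] zeroW[OF l] by metis
      then obtain l' where "w0 = l' *\<^sub>R u" using par_vec[of u u] u0 by auto
      then show False using False by blast
    qed
    then show ?thesis using two_dim[OF u0 e] by blast
  qed
qed

theorem proposition3p2:
  fixes r :: "real^'n^'n" and nN :: 'n and g a b :: real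
    and c :: "real \<Rightarrow> real^'n"
  assumes "CARD('n) \<ge> 2"
    and "\<forall>p q. r$p$q = r$q$p"
    and "\<forall>x::real^'n. x \<noteq> 0 \<longrightarrow> (\<Sum>p\<in>UNIV. \<Sum>q\<in>UNIV. r$p$q * x$p * x$q) > 0"
    and "r$nN$nN = 1"
    and "\<forall>a. a \<noteq> nN \<longrightarrow> r$nN$a = 0"
    and "-2 < g" and "g < 2"
    and "a < b"
    and "qe_geodesic g r c a b"
  shows "\<exists>V :: (real^'n) set. subspace V \<and> dim V = 2 \<and> (\<forall>s\<in>{a<..<b}. c s \<in> V)"
proof -
  note sym = assms(2) and pd = assms(3) and g = assms(6) assms(7)
  obtain c' c'' where G: "\<forall>s\<in>{a<..<b}. c s \<noteq> 0 \<and>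
        (c has_vector_derivative c' s) (at s) \<and>
        (c' has_vector_derivative c'' s) (at s) \<and>
        (\<forall>p. c'' s $ p + (\<Sum>q\<in>UNIV. \<Sum>m\<in>UNIV.
                 christoffel g r (c s) q p m * c' s $ q * c' s $ m) = 0)"
    using assms(9) unfolding qe_geodesic_def by blast
  define \<mu> where "\<mu> s = - (\<Sum>q\<in>UNIV. \<Sum>m\<in>UNIV. (1/2) * Fq g r (c s) q m * c' s $ q * c' s $ m)" for s
  have acc: "c'' s = \<mu> s *\<^sub>R c s" if s: "s \<in> {a<..<b}" for s
  proof -
    note Gs = bspec[OF G s]
    have nz: "c s \<noteq> 0" using Gs by (rule conjunct1)
    have Qp: "Qf r (c s) > 0" using pd nz by simp
    have "c'' s $ p = \<mu> s * c s $ p" for p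
    proof -
      have e: "c'' s $ p + (\<Sum>q\<in>UNIV. \<Sum>m\<in>UNIV.
                 christoffel g r (c s) q p m * c' s $ q * c' s $ m) = 0" using Gs by simp
      have "(\<Sum>q\<in>UNIV. \<Sum>m\<in>UNIV. christoffel g r (c s) q p m * c' s $ q * c' s $ m)
          = c s $ p * (\<Sum>q\<in>UNIV. \<Sum>m\<in>UNIV. (1/2) * Fq g r (c s) q m * c' s $ q * c' s $ m)"
        unfolding christoffel_eq[OF sym pd Qp g] by (simp add: sum_distrib_left mult_ac)
      then show ?thesis using e unfolding \<mu>_def by (simp add: algebra_simps)
    qed
    then show ?thesis by (simp add: vec_eq_iff)
  qed
  have H: "\<forall>s\<in>{a<..<b}. c s \<noteq> 0 \<and> (c has_vector_derivative c' s) (at s) \<and>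
        (c' has_vector_derivative c'' s) (at s) \<and> c'' s = \<mu> s *\<^sub>R c s"
  proof
    fix s assume s: "s \<in> {a<..<b}"
    show "c s \<noteq> 0 \<and> (c has_vector_derivative c' s) (at s) \<and>
        (c' has_vector_derivative c'' s) (at s) \<and> c'' s = \<mu> s *\<^sub>R c s"
      using bspec[OF G s] acc[OF s] by simp
  qed
  show ?thesis by (rule planar[OF assms(1) assms(8) H])
qed

end
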